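(* Let $a_0,a_1,a_3\in\mathbb{C}$. The third-order recursion $$z_n = \frac{a_3 z_{n-3} + z_{n-2} + a_1 z_{n-1} + a_0}{z_{n-3}}$$ is periodic with period $8$ (i.e. $z_9=z_1$, $z_{10}=z_2$, $z_{11}=z_3$ in $\mathbb{C}(z_1,z_2,z_3)$) if and only if $(a_0,a_1,a_3)=(-1,-1,0)$ or $(a_0,a_1,a_3)=(1,1,0)$.
   Context: Let $z_1,z_2,z_3$ be independent indeterminates over $\mathbb{C}$ and define $z_n\in\mathbb{C}(z_1,z_2,z_3)$ for $n\ge4$ by the recursion. A third-order recursion is periodic with period $k$ if all iterates are well-defined elements of $\mathbb{C}(z_1,z_2,z_3)$ (no denominator identically zero) and $z_{k+1}=z_1$, $z_{k+2}=z_2$, $z_{k+3}=z_3$. *)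

theory Defs
  imports "HOL-Computational_Algebra.Polynomial" "HOL-Computational_Algebra.Fraction_Field"
begin

text \<open>The rational function field C(z1,z2,z3), realised as the fraction field of
  the polynomial ring C[z1][z2][z3] = complex poly poly poly.\<close>

type_synonym ratfun3 = "complex poly poly poly fract"

definition var1 :: ratfun3 where "var1 = Fract [:[:[:0, 1:]:]:] 1"
definition var2 :: ratfun3 where "var2 = Fract [:[:0, 1:]:] 1"
definition var3 :: ratfun3 where "var3 = Fract [:0, 1:] 1"

definition cst :: "complex \<Rightarrow> ratfun3" where "cst c = Fract [:[:[:c:]:]:] 1"

text \<open>zs n is z_(n+1): zs 0 = z1, zs 1 = z2, zs 2 = z3 and
  z_n = (a3 z_(n-3) + z_(n-2) + a1 z_(n-1) + a0) / z_(n-3).\<close>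
fun zs :: "complex \<Rightarrow> complex \<Rightarrow> complex \<Rightarrow> nat \<Rightarrow> ratfun3" where
  "zs a0 a1 a3 0 = var1"
| "zs a0 a1 a3 (Suc 0) = var2"
| "zs a0 a1 a3 (Suc (Suc 0)) = var3"
| "zs a0 a1 a3 (Suc (Suc (Suc n))) =
     (cst a3 * zs a0 a1 a3 n + zs a0 a1 a3 (Suc n) + cst a1 * zs a0 a1 a3 (Suc (Suc n)) + cst a0)
       / zs a0 a1 a3 n"

text \<open>Periodic with period k: every iterate is well defined (no denominator, i.e. no
  z_n, is identically zero) and z_(k+1) = z1, z_(k+2) = z2, z_(k+3) = z3.\<close>
definition periodic_with :: "complex \<Rightarrow> complex \<Rightarrow> complex \<Rightarrow> nat \<Rightarrow> bool" where
  "periodic_with a0 a1 a3 k \<longleftrightarrow>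
     (\<forall>n. zs a0 a1 a3 n \<noteq> 0) \<and>
     zs a0 a1 a3 k = var1 \<and> zs a0 a1 a3 (k + 1) = var2 \<and> zs a0 a1 a3 (k + 2) = var3"

end

theory Submission
  imports Defs
begin

definition emb :: "complex poly poly poly \<Rightarrow> ratfun3" where "emb p = Fract p 1"
definition XX :: "complex poly poly poly" where "XX = [:[:[:0, 1:]:]:]"
definition YY :: "complex poly poly poly" where "YY = [:[:0, 1:]:]"
definition ZZ :: "complex poly poly poly" where "ZZ = [:0, 1:]"
definition CC :: "complex \<Rightarrow> complex poly poly poly" where "CC c = [:[:[:c:]:]:]"
definition ev :: "complex \<Rightarrow> complex \<Rightarrow> complex \<Rightarrow> complex poly poly poly \<Rightarrow> complex" where
  "ev c1 c2 c3 p = poly (poly (poly p [:[:c3:]:]) [:c2:]) c1"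

lemma emb_add[simp]: "emb (p + q) = emb p + emb q" by (simp add: emb_def)
lemma emb_mult[simp]: "emb (p * q) = emb p * emb q" by (simp add: emb_def)
lemma emb_diff[simp]: "emb (p - q) = emb p - emb q" by (simp add: emb_def)
lemma emb_1[simp]: "emb 1 = 1" by (simp add: emb_def One_fract_def)
lemma emb_0[simp]: "emb 0 = 0" by (simp add: emb_def Zero_fract_def)
lemma emb_eq0[simp]: "emb p = 0 \<longleftrightarrow> p = 0" by (simp add: emb_def Zero_fract_def eq_fract)
lemma var1_emb: "var1 = emb XX" by (simp add: var1_def emb_def XX_def)
lemma var2_emb: "var2 = emb YY" by (simp add: var2_def emb_def YY_def)
lemma var3_emb: "var3 = emb ZZ" by (simp add: var3_def emb_def ZZ_def)
lemma cst_emb: "cst c = emb (CC c)" by (simp add: cst_def emb_def CC_def)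

lemma ev_add[simp]: "ev a b c (p + q) = ev a b c p + ev a b c q" by (simp add: ev_def)
lemma ev_mult[simp]: "ev a b c (p * q) = ev a b c p * ev a b c q" by (simp add: ev_def)
lemma ev_diff[simp]: "ev a b c (p - q) = ev a b c p - ev a b c q" by (simp add: ev_def)
lemma ev_1[simp]: "ev a b c 1 = 1" by (simp add: ev_def)
lemma ev_0[simp]: "ev a b c 0 = 0" by (simp add: ev_def)
lemma ev_X[simp]: "ev a b c XX = a" by (simp add: ev_def XX_def)
lemma ev_Y[simp]: "ev a b c YY = b" by (simp add: ev_def YY_def)
lemma ev_Z[simp]: "ev a b c ZZ = c" by (simp add: ev_def ZZ_def)
lemma ev_C[simp]: "ev a b c (CC d) = d" by (simp add: ev_def CC_def)

lemma emb_numeral[simp]: "emb (numeral k) = numeral k"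
proof -
  show ?thesis unfolding emb_def by (metis Fract_of_nat_eq of_nat_numeral)
qed
lemma ev_numeral[simp]: "ev a b c (numeral k) = numeral k" by (simp add: ev_def)

lemma emb_nz: "ev a b c p \<noteq> 0 \<Longrightarrow> emb p \<noteq> 0" by auto

lemma emb_minus[simp]: "emb (- p) = - emb p" by (simp add: emb_def)
lemma cst_1: "cst 1 = 1" by (simp add: cst_def One_fract_def pCons_one)
lemma cst_0: "cst 0 = 0" by (simp add: cst_def Zero_fract_def)
lemma cst_m1: "cst (-1) = -1"
proof -
  have "CC (-1) = - CC 1" by (simp add: CC_def)
  then show ?thesis by (simp add: cst_emb cst_1[unfolded cst_emb])
qed

lemma zs_rec: "zs a0 a1 a3 (n+3) = (cst a3 * zs a0 a1 a3 n + zs a0 a1 a3 (n+1) + cst a1 * zs a0 a1 a3 (n+2) + cst a0) / zs a0 a1 a3 n"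
proof -
  have e: "n+3 = Suc (Suc (Suc n))" "n+1 = Suc n" "n+2 = Suc (Suc n)" by simp_all
  show ?thesis unfolding e by (rule zs.simps(4))
qed

declare zs.simps(4)[simp del]

lemma zs_012: "zs a0 a1 a3 0 = var1" "zs a0 a1 a3 1 = var2" "zs a0 a1 a3 2 = var3"
  by (simp_all add: numeral_2_eq_2)

definition N3f :: "'a::comm_ring_1 \<Rightarrow> 'a \<Rightarrow> 'a \<Rightarrow> 'a \<Rightarrow> 'a \<Rightarrow> 'a \<Rightarrow> 'a" where
  "N3f x y z a0 a1 a3 = a3*x + y + a1*z + a0"
definition N4f :: "'a::comm_ring_1 \<Rightarrow> 'a \<Rightarrow> 'a \<Rightarrow> 'a \<Rightarrow> 'a \<Rightarrow> 'a \<Rightarrow> 'a" where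
  "N4f x y z a0 a1 a3 = x*(a3*y + z + a0) + a1 * N3f x y z a0 a1 a3"
definition M7f :: "'a::comm_ring_1 \<Rightarrow> 'a \<Rightarrow> 'a \<Rightarrow> 'a \<Rightarrow> 'a \<Rightarrow> 'a \<Rightarrow> 'a" where
  "M7f x y z a0 a1 a3 = x + a1*y + a0"
definition M6f :: "'a::comm_ring_1 \<Rightarrow> 'a \<Rightarrow> 'a \<Rightarrow> 'a \<Rightarrow> 'a \<Rightarrow> 'a \<Rightarrow> 'a" where
  "M6f x y z a0 a1 a3 = M7f x y z a0 a1 a3 + (a1*x + a0)*(z - a3)"
definition M5f :: "'a::comm_ring_1 \<Rightarrow> 'a \<Rightarrow> 'a \<Rightarrow> 'a \<Rightarrow> 'a \<Rightarrow> 'a \<Rightarrow> 'a" where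
  "M5f x y z a0 a1 a3 = M6f x y z a0 a1 a3 + a1 * M7f x y z a0 a1 a3 * (y - a3) + a0*(y - a3)*(z - a3)"
definition Ef :: "'a::comm_ring_1 \<Rightarrow> 'a \<Rightarrow> 'a \<Rightarrow> 'a \<Rightarrow> 'a" where
  "Ef x y z a3 = (x - a3)*(y - a3)*(z - a3)"
definition Pf :: "'a::comm_ring_1 \<Rightarrow> 'a \<Rightarrow> 'a \<Rightarrow> 'a \<Rightarrow> 'a \<Rightarrow> 'a \<Rightarrow> 'a" where
  "Pf x y z a0 a1 a3 = z * M5f x y z a0 a1 a3 * x * y
     - Ef x y z a3 * (a3*z*x*y + N3f x y z a0 a1 a3 * y + a1 * N4f x y z a0 a1 a3 + a0*x*y)"

lemmas Pdefs = Pf_def N3f_def N4f_def M7f_def M6f_def M5f_def Ef_def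

lemma Pf_zero:
  fixes x y z w3 w4 w5 w6 w7 a0 a1 a3 :: "'a::comm_ring_1"
  assumes R0: "w3*x = a3*x + y + a1*z + a0"
    and R1: "w4*y = a3*y + z + a1*w3 + a0"
    and R2: "w5*z = a3*z + w3 + a1*w4 + a0"
    and R5: "x*w5 = a3*w5 + w6 + a1*w7 + a0"
    and R6: "y*w6 = a3*w6 + w7 + a1*x + a0"
    and R7: "z*w7 = a3*w7 + x + a1*y + a0"
  shows "Pf x y z a0 a1 a3 = 0"
proof -
  have h3: "N3f x y z a0 a1 a3 = x*w3" using R0 by (simp add: N3f_def algebra_simps)
  have h4: "N4f x y z a0 a1 a3 = x*y*w4"
  proof -
    have "x*y*w4 = x*(w4*y)" by (simp add: algebra_simps)
    also have "\<dots> = x*(a3*y + z + a0) + a1*(x*w3)" using R1 by (simp add: algebra_simps)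
    finally show ?thesis using h3 by (simp add: N4f_def)
  qed
  have h7: "M7f x y z a0 a1 a3 = (z - a3)*w7" using R7 by (simp add: M7f_def algebra_simps)
  have h6: "M6f x y z a0 a1 a3 = (y - a3)*(z - a3)*w6"
  proof -
    have "(y - a3)*(z - a3)*w6 = (z - a3)*(y*w6 - a3*w6)" by (simp add: algebra_simps)
    also have "\<dots> = (z - a3)*w7 + (a1*x + a0)*(z - a3)" using R6 by (simp add: algebra_simps)
    finally show ?thesis using h7 by (simp add: M6f_def)
  qed
  have h5: "M5f x y z a0 a1 a3 = Ef x y z a3 * w5"
  proof -
    have "Ef x y z a3 * w5 = (y - a3)*(z - a3)*(x*w5 - a3*w5)" by (simp add: Ef_def algebra_simps)
    also have "\<dots> = (y - a3)*(z - a3)*w6 + a1*((z - a3)*w7)*(y - a3) + a0*(y - a3)*(z - a3)"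
      using R5 by (simp add: algebra_simps)
    finally show ?thesis using h6 h7 by (simp add: M5f_def)
  qed
  have "Pf x y z a0 a1 a3 = z * (Ef x y z a3 * w5) * x * y
     - Ef x y z a3 * (a3*z*x*y + (x*w3) * y + a1 * (x*y*w4) + a0*x*y)"
    unfolding Pf_def h3 h4 h5 ..
  also have "\<dots> = Ef x y z a3 * x * y * (w5*z - (a3*z + w3 + a1*w4 + a0))"
    by (simp add: algebra_simps)
  also have "\<dots> = 0" using R2 by simp
  finally show ?thesis .
qed

lemma Pf_emb: "emb (Pf XX YY ZZ (CC a0) (CC a1) (CC a3)) = Pf var1 var2 var3 (cst a0) (cst a1) (cst a3)"
  by (simp add: Pdefs var1_emb var2_emb var3_emb cst_emb)

lemma Pf_ev: "ev c1 c2 c3 (Pf XX YY ZZ (CC a0) (CC a1) (CC a3)) = Pf c1 c2 c3 a0 a1 a3"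
  by (simp add: Pdefs)

lemma solve:
  fixes a0 a1 a3 :: complex
  assumes H: "\<And>c1 c2 c3. Pf c1 c2 c3 a0 a1 a3 = 0"
  shows "(a0, a1, a3) = (-1, -1, 0) \<or> (a0, a1, a3) = (1, 1, 0)"
proof -
  have E1: "Pf a3 a3 1 a0 a1 a3 = 0" and E2: "Pf a3 a3 2 a0 a1 a3 = 0" using H by auto
  have "2*a3^3 = 6*Pf a3 a3 1 a0 a1 a3 - 2*Pf a3 a3 2 a0 a1 a3 + a3*Pf a3 a3 2 a0 a1 a3 - 2*a3*Pf a3 a3 1 a0 a1 a3"
    unfolding Pdefs by algebra
  with E1 E2 have "a3 = 0" by simp
  have p1: "Pf 1 1 1 a0 a1 0 = 0" "Pf 1 2 1 a0 a1 0 = 0" "Pf 1 3 1 a0 a1 0 = 0"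
     "Pf 1 1 2 a0 a1 0 = 0" "Pf 1 2 2 a0 a1 0 = 0" using H \<open>a3 = 0\<close> by auto
  have "6*(a1^2 - 1) = 3*Pf 1 1 1 a0 a1 0 - 3*Pf 1 2 1 a0 a1 0 + Pf 1 3 1 a0 a1 (0::complex)"
    unfolding Pdefs by algebra
  with p1 have "a1^2 = 1" by simp
  then have a1: "a1 = 1 \<or> a1 = -1" by (simp add: power2_eq_1_iff)
  have "4*(a0 - a1) = 4*Pf 1 1 1 a0 a1 0 - 2*Pf 1 2 1 a0 a1 0 - 2*Pf 1 1 2 a0 a1 0 + Pf 1 2 2 a0 a1 (0::complex)"
    unfolding Pdefs by algebra
  with p1 have "a0 = a1" by simp
  with a1 \<open>a3 = 0\<close> show ?thesis by auto
qed


lemma zs_rel: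
  assumes "zs a0 a1 a3 n \<noteq> 0"
  shows "zs a0 a1 a3 (n+3) * zs a0 a1 a3 n = cst a3 * zs a0 a1 a3 n + zs a0 a1 a3 (n+1) + cst a1 * zs a0 a1 a3 (n+2) + cst a0"
  using assms by (simp add: zs_rec)

lemma zs_rel':
  assumes "zs a0 a1 a3 n \<noteq> 0" "n+3 = m" "n+1 = p" "n+2 = q"
  shows "zs a0 a1 a3 m * zs a0 a1 a3 n = cst a3 * zs a0 a1 a3 n + zs a0 a1 a3 p + cst a1 * zs a0 a1 a3 q + cst a0"
  using zs_rel[OF assms(1)] assms(2-4) by simp

lemma conv:
  assumes "periodic_with a0 a1 a3 8"
  shows "(a0, a1, a3) = (-1, -1, 0) \<or> (a0, a1, a3) = (1, 1, 0)"
proof -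
  have nz: "\<And>n. zs a0 a1 a3 n \<noteq> 0" and p8: "zs a0 a1 a3 8 = var1"
    and p9: "zs a0 a1 a3 9 = var2" and p10: "zs a0 a1 a3 10 = var3"
    using assms by (simp_all add: periodic_with_def)
  note r = zs_rel[OF nz]
  have R0: "zs a0 a1 a3 3 * var1 = cst a3 * var1 + var2 + cst a1 * var3 + cst a0"
    using zs_rel'[where n=0 and m=3 and p=1 and q=2, OF nz] by (simp_all add: zs_012)
  have R1: "zs a0 a1 a3 4 * var2 = cst a3 * var2 + var3 + cst a1 * zs a0 a1 a3 3 + cst a0"
    using zs_rel'[where n=1 and m=4 and p=2 and q=3, OF nz] by (simp_all add: zs_012)
  have R2: "zs a0 a1 a3 5 * var3 = cst a3 * var3 + zs a0 a1 a3 3 + cst a1 * zs a0 a1 a3 4 + cst a0"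
    using zs_rel'[where n=2 and m=5 and p=3 and q=4, OF nz] by (simp_all add: zs_012)
  have R5: "var1 * zs a0 a1 a3 5 = cst a3 * zs a0 a1 a3 5 + zs a0 a1 a3 6 + cst a1 * zs a0 a1 a3 7 + cst a0"
    using zs_rel'[where n=5 and m=8 and p=6 and q=7, OF nz] by (simp_all add: p8)
  have R6: "var2 * zs a0 a1 a3 6 = cst a3 * zs a0 a1 a3 6 + zs a0 a1 a3 7 + cst a1 * var1 + cst a0"
    using zs_rel'[where n=6 and m=9 and p=7 and q=8, OF nz] by (simp_all add: p8 p9)
  have R7: "var3 * zs a0 a1 a3 7 = cst a3 * zs a0 a1 a3 7 + var1 + cst a1 * var2 + cst a0"
    using zs_rel'[where n=7 and m=10 and p=8 and q=9, OF nz] by (simp_all add: p8 p9 p10)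
  have "Pf var1 var2 var3 (cst a0) (cst a1) (cst a3) = 0"
    by (rule Pf_zero[OF R0 R1 R2 R5 R6 R7])
  then have "Pf XX YY ZZ (CC a0) (CC a1) (CC a3) = 0"
    using Pf_emb[of a0 a1 a3] by simp
  then have "\<And>c1 c2 c3. Pf c1 c2 c3 a0 a1 a3 = 0"
    using Pf_ev by (metis ev_0)
  then show ?thesis by (rule solve)
qed

lemma per_shift:
  assumes "zs a0 a1 a3 8 = var1" "zs a0 a1 a3 9 = var2" "zs a0 a1 a3 10 = var3"
  shows "zs a0 a1 a3 (n+8) = zs a0 a1 a3 n \<and> zs a0 a1 a3 (n+9) = zs a0 a1 a3 (n+1)
     \<and> zs a0 a1 a3 (n+10) = zs a0 a1 a3 (n+2)"
proof (induction n)
  case 0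
  then show ?case using assms by (simp add: zs_012)
next
  case (Suc n)
  have e1: "Suc n + 8 = n + 9" "Suc n + 9 = n + 10" "Suc n + 10 = (n+8) + 3"
     "Suc n + 1 = n + 2" "Suc n + 2 = n + 3" "n + 8 + 1 = n + 9" "n + 8 + 2 = n + 10" by simp_all
  have e2: "n+8+1 = n+9" "n+8+2 = n+10" by simp_all
  have A: "zs a0 a1 a3 ((n+8)+3) = zs a0 a1 a3 (n+3)"
    unfolding zs_rec[of a0 a1 a3 "n+8"] zs_rec[of a0 a1 a3 n] e2 using Suc.IH by simp
  show ?case unfolding e1 using Suc.IH A by simp
qed

lemma per_mod:
  assumes "zs a0 a1 a3 8 = var1" "zs a0 a1 a3 9 = var2" "zs a0 a1 a3 10 = var3"
  shows "zs a0 a1 a3 n = zs a0 a1 a3 (n mod 8)"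
proof -
  have k: "zs a0 a1 a3 (m + 8*k) = zs a0 a1 a3 m" for m k
  proof (induction k)
    case 0 then show ?case by simp
  next
    case (Suc k)
    have e: "m + 8 * Suc k = (m + 8*k) + 8" by simp
    have "zs a0 a1 a3 ((m + 8*k) + 8) = zs a0 a1 a3 (m + 8*k)"
      using per_shift[OF assms, of "m + 8*k"] by blast
    then show ?case unfolding e using Suc.IH by simp
  qed
  have "n = n mod 8 + 8 * (n div 8)" by simp
  then show ?thesis using k by metis
qed

lemma fwd_generic:
  assumes "zs a0 a1 a3 8 = var1" "zs a0 a1 a3 9 = var2" "zs a0 a1 a3 10 = var3"
    and "\<And>k. k < 8 \<Longrightarrow> zs a0 a1 a3 k \<noteq> 0"
  shows "periodic_with a0 a1 a3 8"
  unfolding periodic_with_def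
proof (intro conjI allI)
  fix n
  have "(n::nat) mod 8 < 8" by simp
  then show "zs a0 a1 a3 n \<noteq> 0" using assms(4) per_mod[OF assms(1-3), of n] by simp
qed (use assms in simp_all)

lemma nzh: "r = emb p \<Longrightarrow> ev 1 1 1 p \<noteq> 0 \<Longrightarrow> r \<noteq> 0" by auto

lemma lt8: "(k::nat) < 8 \<Longrightarrow> k = 0 \<or> k = 1 \<or> k = 2 \<or> k = 3 \<or> k = 4 \<or> k = 5 \<or> k = 6 \<or> k = 7"
  by presburger

lemma idx: "(0::nat)+3 = 3" "(0::nat)+1 = 1" "(0::nat)+2 = 2" "(1::nat)+3 = 4" "(1::nat)+1 = 2" "(1::nat)+2 = 3" "(2::nat)+3 = 5" "(2::nat)+1 = 3" "(2::nat)+2 = 4" "(3::nat)+3 = 6" "(3::nat)+1 = 4" "(3::nat)+2 = 5" "(4::nat)+3 = 7" "(4::nat)+1 = 5" "(4::nat)+2 = 6" "(5::nat)+3 = 8" "(5::nat)+1 = 6" "(5::nat)+2 = 7" "(6::nat)+3 = 9" "(6::nat)+1 = 7" "(6::nat)+2 = 8" "(7::nat)+3 = 10" "(7::nat)+1 = 8" "(7::nat)+2 = 9" by simp_all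

lemma step:
  assumes "zs a0 a1 a3 n = d" "zs a0 a1 a3 (n+1) = p" "zs a0 a1 a3 (n+2) = q" "d \<noteq> 0"
    and "v * d = cst a3 * d + p + cst a1 * q + cst a0"
  shows "zs a0 a1 a3 (n+3) = v"
  using assms by (simp add: zs_rec field_simps)

lemma fwd1: "periodic_with (1) (1) 0 8"
proof -
  have xe: "var1 = emb XX" "var2 = emb YY" "var3 = emb ZZ" by (simp_all add: var1_emb var2_emb var3_emb)
  have nx: "var1 \<noteq> 0" "var2 \<noteq> 0" "var3 \<noteq> 0" by (rule nzh, rule xe, simp)+
  define ix where "ix = inverse var1"
  define iy where "iy = inverse var2"
  define iz where "iz = inverse var3"
  have inv: "var1 * ix = 1" "var2 * iy = 1" "var3 * iz = 1" using nx by (simp_all add: ix_def iy_def iz_def)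
  have ninv: "ix \<noteq> 0" "iy \<noteq> 0" "iz \<noteq> 0" using nx by (simp_all add: ix_def iy_def iz_def)
  have nA: "1 + var2 + var3 \<noteq> 0" by (rule nzh[of _ "1 + YY + ZZ"]) (simp_all add: xe)
  have nB: "1 + var1 + var2 + var3 + var1*var3 \<noteq> 0" by (rule nzh[of _ "1 + XX + YY + ZZ + XX*ZZ"]) (simp_all add: xe)
  have nC: "1 + var1 + var2 \<noteq> 0" by (rule nzh[of _ "1 + XX + YY"]) (simp_all add: xe)
  have nF: "1 + var3 + 2*var2 + var2*var3 + var2*var2 + var1 + var1*var3 + var1*var2 \<noteq> 0" by (rule nzh[of _ "1 + ZZ + 2*YY + YY*ZZ + YY*YY + XX + XX*ZZ + XX*YY"]) (simp_all add: xe)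
  note b = zs_012[of "1" "1" 0] cst_1 cst_0 cst_m1
  have w3: "zs (1) (1) 0 3 = (1 + var2 + var3)*ix"
  proof (rule step[where n=0 and d="var1" and p="var2" and q="var3", unfolded idx])
    show "((1 + var2 + var3)*ix) * (var1) = cst 0 * (var1) + var2 + cst (1) * (var3) + cst (1)"
      unfolding b using inv by algebra
  qed (use b  nx ninv nA nB nC nF in \<open>simp_all\<close>)
  have w4: "zs (1) (1) 0 4 = (1 + var1 + var2 + var3 + var1*var3)*ix*iy"
  proof (rule step[where n=1 and d="var2" and p="var3" and q="(1 + var2 + var3)*ix", unfolded idx])
    show "((1 + var1 + var2 + var3 + var1*var3)*ix*iy) * (var2) = cst 0 * (var2) + var3 + cst (1) * ((1 + var2 + var3)*ix) + cst (1)"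
      unfolding b using inv by algebra
  qed (use b w3 nx ninv nA nB nC nF in \<open>simp_all\<close>)
  have w5: "zs (1) (1) 0 5 = (1 + var3 + 2*var2 + var2*var3 + var2*var2 + var1 + var1*var3 + var1*var2)*ix*iy*iz"
  proof (rule step[where n=2 and d="var3" and p="(1 + var2 + var3)*ix" and q="(1 + var1 + var2 + var3 + var1*var3)*ix*iy", unfolded idx])
    show "((1 + var3 + 2*var2 + var2*var3 + var2*var2 + var1 + var1*var3 + var1*var2)*ix*iy*iz) * (var3) = cst 0 * (var3) + (1 + var2 + var3)*ix + cst (1) * ((1 + var1 + var2 + var3 + var1*var3)*ix*iy) + cst (1)"
      unfolding b using inv by algebra
  qed (use b w3 w4 nx ninv nA nB nC nF in \<open>simp_all\<close>)
  have w6: "zs (1) (1) 0 6 = (1 + var1 + var2 + var3 + var1*var3)*iy*iz"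
  proof (rule step[where n=3 and d="(1 + var2 + var3)*ix" and p="(1 + var1 + var2 + var3 + var1*var3)*ix*iy" and q="(1 + var3 + 2*var2 + var2*var3 + var2*var2 + var1 + var1*var3 + var1*var2)*ix*iy*iz", unfolded idx])
    show "((1 + var1 + var2 + var3 + var1*var3)*iy*iz) * ((1 + var2 + var3)*ix) = cst 0 * ((1 + var2 + var3)*ix) + (1 + var1 + var2 + var3 + var1*var3)*ix*iy + cst (1) * ((1 + var3 + 2*var2 + var2*var3 + var2*var2 + var1 + var1*var3 + var1*var2)*ix*iy*iz) + cst (1)"
      unfolding b using inv by algebra
  qed (use b w3 w4 w5 nx ninv nA nB nC nF in \<open>simp_all\<close>)
  have w7: "zs (1) (1) 0 7 = (1 + var1 + var2)*iz"
  proof (rule step[where n=4 and d="(1 + var1 + var2 + var3 + var1*var3)*ix*iy" and p="(1 + var3 + 2*var2 + var2*var3 + var2*var2 + var1 + var1*var3 + var1*var2)*ix*iy*iz" and q="(1 + var1 + var2 + var3 + var1*var3)*iy*iz", unfolded idx])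
    show "((1 + var1 + var2)*iz) * ((1 + var1 + var2 + var3 + var1*var3)*ix*iy) = cst 0 * ((1 + var1 + var2 + var3 + var1*var3)*ix*iy) + (1 + var3 + 2*var2 + var2*var3 + var2*var2 + var1 + var1*var3 + var1*var2)*ix*iy*iz + cst (1) * ((1 + var1 + var2 + var3 + var1*var3)*iy*iz) + cst (1)"
      unfolding b using inv by algebra
  qed (use b w4 w5 w6 nx ninv nA nB nC nF in \<open>simp_all\<close>)
  have w8: "zs (1) (1) 0 8 = var1"
  proof (rule step[where n=5 and d="(1 + var3 + 2*var2 + var2*var3 + var2*var2 + var1 + var1*var3 + var1*var2)*ix*iy*iz" and p="(1 + var1 + var2 + var3 + var1*var3)*iy*iz" and q="(1 + var1 + var2)*iz", unfolded idx])
    show "(var1) * ((1 + var3 + 2*var2 + var2*var3 + var2*var2 + var1 + var1*var3 + var1*var2)*ix*iy*iz) = cst 0 * ((1 + var3 + 2*var2 + var2*var3 + var2*var2 + var1 + var1*var3 + var1*var2)*ix*iy*iz) + (1 + var1 + var2 + var3 + var1*var3)*iy*iz + cst (1) * ((1 + var1 + var2)*iz) + cst (1)"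
      unfolding b using inv by algebra
  qed (use b w5 w6 w7 nx ninv nA nB nC nF in \<open>simp_all\<close>)
  have w9: "zs (1) (1) 0 9 = var2"
  proof (rule step[where n=6 and d="(1 + var1 + var2 + var3 + var1*var3)*iy*iz" and p="(1 + var1 + var2)*iz" and q="var1", unfolded idx])
    show "(var2) * ((1 + var1 + var2 + var3 + var1*var3)*iy*iz) = cst 0 * ((1 + var1 + var2 + var3 + var1*var3)*iy*iz) + (1 + var1 + var2)*iz + cst (1) * (var1) + cst (1)"
      unfolding b using inv by algebra
  qed (use b w6 w7 w8 nx ninv nA nB nC nF in \<open>simp_all\<close>)
  have w10: "zs (1) (1) 0 10 = var3"
  proof (rule step[where n=7 and d="(1 + var1 + var2)*iz" and p="var1" and q="var2", unfolded idx])
    show "(var3) * ((1 + var1 + var2)*iz) = cst 0 * ((1 + var1 + var2)*iz) + var1 + cst (1) * (var2) + cst (1)"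
      unfolding b using inv by algebra
  qed (use b w7 w8 w9 nx ninv nA nB nC nF in \<open>simp_all\<close>)
  show ?thesis
  proof (rule fwd_generic)
    show "zs (1) (1) 0 8 = var1" "zs (1) (1) 0 9 = var2" "zs (1) (1) 0 10 = var3"
      using w8 w9 w10 by simp_all
    fix k :: nat assume "k < 8"
    from lt8[OF this] show "zs (1) (1) 0 k \<noteq> 0"
      using nx ninv nA nB nC nF b w3 w4 w5 w6 w7 by (elim disjE) simp_all
  qed
qed

lemma fwd2: "periodic_with (-1) (-1) 0 8"
proof -
  have xe: "var1 = emb XX" "var2 = emb YY" "var3 = emb ZZ" by (simp_all add: var1_emb var2_emb var3_emb)
  have nx: "var1 \<noteq> 0" "var2 \<noteq> 0" "var3 \<noteq> 0" by (rule nzh, rule xe, simp)+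
  define ix where "ix = inverse var1"
  define iy where "iy = inverse var2"
  define iz where "iz = inverse var3"
  have inv: "var1 * ix = 1" "var2 * iy = 1" "var3 * iz = 1" using nx by (simp_all add: ix_def iy_def iz_def)
  have ninv: "ix \<noteq> 0" "iy \<noteq> 0" "iz \<noteq> 0" using nx by (simp_all add: ix_def iy_def iz_def)
  have nA: "var2 - 1 - var3 \<noteq> 0" by (rule nzh[of _ "YY - 1 - ZZ"]) (simp_all add: xe)
  have nB: "1 + var3 - var2 - var1 + var1*var3 \<noteq> 0" by (rule nzh[of _ "1 + ZZ - YY - XX + XX*ZZ"]) (simp_all add: xe)
  have nF: "var2*var2 + var1 - 1 - var3 - var2*var3 - var1*var3 - var1*var2 \<noteq> 0" by (rule nzh[of _ "YY*YY + XX - 1 - ZZ - YY*ZZ - XX*ZZ - XX*YY"]) (simp_all add: xe)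
  have nD: "var1 - 1 - var3 - var2 - var1*var3 \<noteq> 0" by (rule nzh[of _ "XX - 1 - ZZ - YY - XX*ZZ"]) (simp_all add: xe)
  have nC: "var1 - 1 - var2 \<noteq> 0" by (rule nzh[of _ "XX - 1 - YY"]) (simp_all add: xe)
  note b = zs_012[of "-1" "-1" 0] cst_1 cst_0 cst_m1
  have w3: "zs (-1) (-1) 0 3 = (var2 - 1 - var3)*ix"
  proof (rule step[where n=0 and d="var1" and p="var2" and q="var3", unfolded idx])
    show "((var2 - 1 - var3)*ix) * (var1) = cst 0 * (var1) + var2 + cst (-1) * (var3) + cst (-1)"
      unfolding b using inv by algebra
  qed (use b  nx ninv nA nB nF nD nC in \<open>simp_all\<close>)
  have w4: "zs (-1) (-1) 0 4 = (1 + var3 - var2 - var1 + var1*var3)*ix*iy"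
  proof (rule step[where n=1 and d="var2" and p="var3" and q="(var2 - 1 - var3)*ix", unfolded idx])
    show "((1 + var3 - var2 - var1 + var1*var3)*ix*iy) * (var2) = cst 0 * (var2) + var3 + cst (-1) * ((var2 - 1 - var3)*ix) + cst (-1)"
      unfolding b using inv by algebra
  qed (use b w3 nx ninv nA nB nF nD nC in \<open>simp_all\<close>)
  have w5: "zs (-1) (-1) 0 5 = (var2*var2 + var1 - 1 - var3 - var2*var3 - var1*var3 - var1*var2)*ix*iy*iz"
  proof (rule step[where n=2 and d="var3" and p="(var2 - 1 - var3)*ix" and q="(1 + var3 - var2 - var1 + var1*var3)*ix*iy", unfolded idx])
    show "((var2*var2 + var1 - 1 - var3 - var2*var3 - var1*var3 - var1*var2)*ix*iy*iz) * (var3) = cst 0 * (var3) + (var2 - 1 - var3)*ix + cst (-1) * ((1 + var3 - var2 - var1 + var1*var3)*ix*iy) + cst (-1)"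
      unfolding b using inv by algebra
  qed (use b w3 w4 nx ninv nA nB nF nD nC in \<open>simp_all\<close>)
  have w6: "zs (-1) (-1) 0 6 = (var1 - 1 - var3 - var2 - var1*var3)*iy*iz"
  proof (rule step[where n=3 and d="(var2 - 1 - var3)*ix" and p="(1 + var3 - var2 - var1 + var1*var3)*ix*iy" and q="(var2*var2 + var1 - 1 - var3 - var2*var3 - var1*var3 - var1*var2)*ix*iy*iz", unfolded idx])
    show "((var1 - 1 - var3 - var2 - var1*var3)*iy*iz) * ((var2 - 1 - var3)*ix) = cst 0 * ((var2 - 1 - var3)*ix) + (1 + var3 - var2 - var1 + var1*var3)*ix*iy + cst (-1) * ((var2*var2 + var1 - 1 - var3 - var2*var3 - var1*var3 - var1*var2)*ix*iy*iz) + cst (-1)"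
      unfolding b using inv by algebra
  qed (use b w3 w4 w5 nx ninv nA nB nF nD nC in \<open>simp_all\<close>)
  have w7: "zs (-1) (-1) 0 7 = (var1 - 1 - var2)*iz"
  proof (rule step[where n=4 and d="(1 + var3 - var2 - var1 + var1*var3)*ix*iy" and p="(var2*var2 + var1 - 1 - var3 - var2*var3 - var1*var3 - var1*var2)*ix*iy*iz" and q="(var1 - 1 - var3 - var2 - var1*var3)*iy*iz", unfolded idx])
    show "((var1 - 1 - var2)*iz) * ((1 + var3 - var2 - var1 + var1*var3)*ix*iy) = cst 0 * ((1 + var3 - var2 - var1 + var1*var3)*ix*iy) + (var2*var2 + var1 - 1 - var3 - var2*var3 - var1*var3 - var1*var2)*ix*iy*iz + cst (-1) * ((var1 - 1 - var3 - var2 - var1*var3)*iy*iz) + cst (-1)"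
      unfolding b using inv by algebra
  qed (use b w4 w5 w6 nx ninv nA nB nF nD nC in \<open>simp_all\<close>)
  have w8: "zs (-1) (-1) 0 8 = var1"
  proof (rule step[where n=5 and d="(var2*var2 + var1 - 1 - var3 - var2*var3 - var1*var3 - var1*var2)*ix*iy*iz" and p="(var1 - 1 - var3 - var2 - var1*var3)*iy*iz" and q="(var1 - 1 - var2)*iz", unfolded idx])
    show "(var1) * ((var2*var2 + var1 - 1 - var3 - var2*var3 - var1*var3 - var1*var2)*ix*iy*iz) = cst 0 * ((var2*var2 + var1 - 1 - var3 - var2*var3 - var1*var3 - var1*var2)*ix*iy*iz) + (var1 - 1 - var3 - var2 - var1*var3)*iy*iz + cst (-1) * ((var1 - 1 - var2)*iz) + cst (-1)"
      unfolding b using inv by algebra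
  qed (use b w5 w6 w7 nx ninv nA nB nF nD nC in \<open>simp_all\<close>)
  have w9: "zs (-1) (-1) 0 9 = var2"
  proof (rule step[where n=6 and d="(var1 - 1 - var3 - var2 - var1*var3)*iy*iz" and p="(var1 - 1 - var2)*iz" and q="var1", unfolded idx])
    show "(var2) * ((var1 - 1 - var3 - var2 - var1*var3)*iy*iz) = cst 0 * ((var1 - 1 - var3 - var2 - var1*var3)*iy*iz) + (var1 - 1 - var2)*iz + cst (-1) * (var1) + cst (-1)"
      unfolding b using inv by algebra
  qed (use b w6 w7 w8 nx ninv nA nB nF nD nC in \<open>simp_all\<close>)
  have w10: "zs (-1) (-1) 0 10 = var3"
  proof (rule step[where n=7 and d="(var1 - 1 - var2)*iz" and p="var1" and q="var2", unfolded idx])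
    show "(var3) * ((var1 - 1 - var2)*iz) = cst 0 * ((var1 - 1 - var2)*iz) + var1 + cst (-1) * (var2) + cst (-1)"
      unfolding b using inv by algebra
  qed (use b w7 w8 w9 nx ninv nA nB nF nD nC in \<open>simp_all\<close>)
  show ?thesis
  proof (rule fwd_generic)
    show "zs (-1) (-1) 0 8 = var1" "zs (-1) (-1) 0 9 = var2" "zs (-1) (-1) 0 10 = var3"
      using w8 w9 w10 by simp_all
    fix k :: nat assume "k < 8"
    from lt8[OF this] show "zs (-1) (-1) 0 k \<noteq> 0"
      using nx ninv nA nB nF nD nC b w3 w4 w5 w6 w7 by (elim disjE) simp_all
  qed
qed

theorem mainTheorem6:
  fixes a0 a1 a3 :: complex
  shows "periodic_with a0 a1 a3 8 \<longleftrightarrow> (a0, a1, a3) = (-1, -1, 0) \<or> (a0, a1, a3) = (1, 1, 0)"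
  using conv fwd1 fwd2 by auto

end
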